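(* Let $N=\{1,\dots,n\}$, let $F:2^N\to\mathbb{R}$ be quasi-submodular, and run the minimization procedure (described in the context) from an arbitrary $X_0\subseteq N$. Then for every iteration $t$ other than the last one (i.e., every $t$ with $X_{t+1}\neq X_t$), $F(X_{t+1})<F(X_t)$.
   Context: For $A\subseteq N$ and $i\in N$, write $A+i=A\cup\{i\}$, $A-i=A\setminus\{i\}$, and $F(i\mid A)=F(A+i)-F(A)$. $F$ is quasi-submodular if for all $X,Y\subseteq N$ both hold: $F(X\cap Y)\ge F(X)\Rightarrow F(Y)\ge F(X\cup Y)$, and $F(X\cap Y)>F(X)\Rightarrow F(Y)>F(X\cup Y)$. Minimization procedure: given $X_0\subseteq N$, for $t=0,1,2,\dots$: let $U_t=\{u\in N\setminus X_t: F(u\mid X_t)<0\}$ and $Y_t=X_t\cup U_t$; let $D_t=\{d\in X_t: F(d\mid Y_t-d)>0\}$ and $X_{t+1}=Y_t\setminus D_t$; if $X_{t+1}=X_t$, stop and output $X_t$; otherwise continue with $t+1$. *)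

theory Defs
  imports Complex_Main
begin

definition gain :: "('a set \<Rightarrow> real) \<Rightarrow> 'a \<Rightarrow> 'a set \<Rightarrow> real" where
  "gain F i A = F (insert i A) - F A"

definition quasi_submodular :: "'a set \<Rightarrow> ('a set \<Rightarrow> real) \<Rightarrow> bool" where
  "quasi_submodular V F \<longleftrightarrow>
     (\<forall>X Y. X \<subseteq> V \<longrightarrow> Y \<subseteq> V \<longrightarrow>
        (F (X \<inter> Y) \<ge> F X \<longrightarrow> F Y \<ge> F (X \<union> Y)) \<and>
        (F (X \<inter> Y) > F X \<longrightarrow> F Y > F (X \<union> Y)))"

definition mm_step :: "'a set \<Rightarrow> ('a set \<Rightarrow> real) \<Rightarrow> 'a set \<Rightarrow> 'a set" where
  "mm_step V F X =
     (let U = {u \<in> V - X. gain F u X < 0};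
          Y = X \<union> U;
          D = {d \<in> X. gain F d (Y - {d}) > 0}
      in Y - D)"

text \<open>The t-th iterate X_t starting from X_0. Once X_{t+1} = X_t the sequence is constant,
  so the procedure stopping corresponds to reaching a fixed point.\<close>
definition mm_iter :: "'a set \<Rightarrow> ('a set \<Rightarrow> real) \<Rightarrow> 'a set \<Rightarrow> nat \<Rightarrow> 'a set" where
  "mm_iter V F X0 t = (mm_step V F ^^ t) X0"

end

theory Submission
  imports Defs
begin

lemma add_one:
  assumes q: "quasi_submodular V F" and "X \<subseteq> A" "A \<subseteq> V" "u \<in> V" "u \<notin> A"
    and h: "F (insert u X) < F X"
  shows "F (insert u A) < F A"
proof -
  have i: "insert u X \<inter> A = X" using assms by auto
  have un: "insert u X \<union> A = insert u A" using assms by auto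
  have "insert u X \<subseteq> V" using assms by auto
  with q assms(3) have "F (insert u X \<inter> A) > F (insert u X) \<longrightarrow> F A > F (insert u X \<union> A)"
    unfolding quasi_submodular_def by blast
  thus ?thesis using i un h by simp
qed

lemma add_many:
  assumes q: "quasi_submodular V F" and "finite S"
  shows "S \<subseteq> V \<Longrightarrow> X \<subseteq> V \<Longrightarrow> X \<inter> S = {} \<Longrightarrow> (\<forall>u\<in>S. F (insert u X) < F X)
    \<Longrightarrow> F (X \<union> S) \<le> F X \<and> (S \<noteq> {} \<longrightarrow> F (X \<union> S) < F X)"
  using assms(2)
proof (induction S rule: finite_induct)
  case empty then show ?case by simp
next
  case (insert u S)
  then have ih: "F (X \<union> S) \<le> F X" by auto
  have "F (insert u (X \<union> S)) < F (X \<union> S)"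
    using add_one[OF q, of X "X \<union> S" u] insert by auto
  then show ?case using ih by auto
qed

lemma rem_one:
  assumes q: "quasi_submodular V F" and "d \<in> B" "B \<subseteq> Y" "Y \<subseteq> V"
    and h: "F (Y - {d}) < F Y"
  shows "F (B - {d}) < F B"
proof (rule ccontr)
  assume c: "\<not> ?thesis"
  have i: "B \<inter> (Y - {d}) = B - {d}" using assms by auto
  have un: "B \<union> (Y - {d}) = Y" using assms by auto
  have "B \<subseteq> V" "Y - {d} \<subseteq> V" using assms by auto
  with q have "F (B \<inter> (Y - {d})) \<ge> F B \<longrightarrow> F (Y - {d}) \<ge> F (B \<union> (Y - {d}))"
    unfolding quasi_submodular_def by blast
  thus False using i un h c by simp
qed

lemma rem_many:
  assumes q: "quasi_submodular V F" and "finite S"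
  shows "S \<subseteq> Y \<Longrightarrow> Y \<subseteq> V \<Longrightarrow> (\<forall>d\<in>S. F (Y - {d}) < F Y)
    \<Longrightarrow> F (Y - S) \<le> F Y \<and> (S \<noteq> {} \<longrightarrow> F (Y - S) < F Y)"
  using assms(2)
proof (induction S rule: finite_induct)
  case empty then show ?case by simp
next
  case (insert d S)
  then have ih: "F (Y - S) \<le> F Y" by auto
  have e: "Y - insert d S = (Y - S) - {d}" by auto
  have "F ((Y - S) - {d}) < F (Y - S)"
    using rem_one[OF q, of d "Y - S" Y] insert by auto
  then show ?case using ih e by auto
qed

lemma step_sub: "X \<subseteq> V \<Longrightarrow> mm_step V F X \<subseteq> V"
  unfolding mm_step_def Let_def by auto

lemma iter_sub: "X0 \<subseteq> V \<Longrightarrow> mm_iter V F X0 t \<subseteq> V"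
  unfolding mm_iter_def by (induction t) (auto simp: step_sub)

lemma step_dec:
  assumes q: "quasi_submodular V F" and fin: "finite V" and XV: "X \<subseteq> V"
    and ne: "mm_step V F X \<noteq> X"
  shows "F (mm_step V F X) < F X"
proof -
  define U where "U = {u \<in> V - X. gain F u X < 0}"
  define Y where "Y = X \<union> U"
  define D where "D = {d \<in> X. gain F d (Y - {d}) > 0}"
  have st: "mm_step V F X = Y - D" unfolding mm_step_def Let_def U_def Y_def D_def by simp
  have UV1: "U \<subseteq> V" unfolding U_def by blast
  have UV2: "finite U" using finite_subset[OF UV1 fin] .
  have UX: "X \<inter> U = {}" unfolding U_def by blast
  have Ug: "\<forall>u\<in>U. F (insert u X) < F X" unfolding U_def gain_def by simp
  have A: "F Y \<le> F X \<and> (U \<noteq> {} \<longrightarrow> F Y < F X)"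
    unfolding Y_def by (rule add_many[OF q UV2 UV1 XV UX Ug])
  have DX: "D \<subseteq> X" unfolding D_def by blast
  have DY: "D \<subseteq> Y" using DX unfolding Y_def by blast
  have DF: "finite D" using finite_subset[OF DX] finite_subset[OF XV fin] by blast
  have YV: "Y \<subseteq> V" using XV UV1 unfolding Y_def by blast
  have "\<forall>d\<in>D. F (Y - {d}) < F Y"
  proof
    fix d assume "d \<in> D"
    then have dX: "d \<in> X" and g: "gain F d (Y - {d}) > 0" unfolding D_def by simp_all
    have "insert d (Y - {d}) = Y" using dX unfolding Y_def by blast
    then show "F (Y - {d}) < F Y" using g unfolding gain_def by simp
  qed
  then have B: "F (Y - D) \<le> F Y \<and> (D \<noteq> {} \<longrightarrow> F (Y - D) < F Y)"
    by (rule rem_many[OF q DF DY YV])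
  have "U \<noteq> {} \<or> D \<noteq> {}"
  proof (rule ccontr)
    assume "\<not> ?thesis"
    then have "Y - D = X" unfolding Y_def by simp
    then show False using ne st by simp
  qed
  then have "F (Y - D) < F X" using A B by linarith
  then show ?thesis using st by simp
qed

theorem lemma1:
  fixes n :: nat and F :: "nat set \<Rightarrow> real" and X0 :: "nat set" and t :: nat
  assumes "quasi_submodular {1..n} F"
    and "X0 \<subseteq> {1..n}"
    and "mm_iter {1..n} F X0 (Suc t) \<noteq> mm_iter {1..n} F X0 t"
  shows "F (mm_iter {1..n} F X0 (Suc t)) < F (mm_iter {1..n} F X0 t)"
proof -
  have e: "mm_iter {1..n} F X0 (Suc t) = mm_step {1..n} F (mm_iter {1..n} F X0 t)"
    unfolding mm_iter_def by simp
  show ?thesis unfolding e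
    by (rule step_dec[OF assms(1) finite_atLeastAtMost iter_sub[OF assms(2)]]) (use assms(3) e in simp)
qed

end
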